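(* Let $V=(J,(V_j)_{j\in J},d,H)$ be a hypergraph system, let $(\nu_e)_{e\in H}$ be a pseudorandom system of measures on $V$, and let $e\in H$. Let $0<\varepsilon<1$ and $0<\sigma<1/2$, let $I\subseteq\mathbb{R}$ be an interval, and let $G:V_e\to I$ be a function. Then, if $N$ is sufficiently large depending on $\varepsilon,\sigma$, there exists a $\sigma$-algebra $\mathcal{B}=\mathcal{B}_{\varepsilon,\sigma,e}(G)$ on $V_e$ with the following properties: (a) for every $\sigma$-algebra $\mathcal{B}'$ on $V_e$, $|G(x)-\mathbb{E}(G\mid\mathcal{B}\vee\mathcal{B}')(x)|\le\varepsilon$ for all $x\in V_e$; (b) $\mathcal{B}$ is generated by at most $O_{\varepsilon,I}(1)$ atoms; (c) for every atom $A$ of $\mathcal{B}$ there is a polynomial $P_A:\mathbb{R}\to\mathbb{R}$ of degree $O_{\varepsilon,\sigma,I}(1)$ with all coefficients $O_{\varepsilon,\sigma,I}(1)$, such that $P_A(y)=O(1)$ for all $y\in I$ and $$\mathbb{E}\big(|1_A(x)-P_A(G(x))|\,(\nu_e(x)+1)\mid x\in V_e\big)=O(\sigma).$$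
   Context: A hypergraph system is a quadruple $V=(J,(V_j)_{j\in J},d,H)$ where $J$ is a finite set, each $V_j$ is a finite nonempty set, $d\ge1$ is an integer and $H\subseteq\binom{J}{d}:=\{e\subseteq J:|e|=d\}$; for $e\subseteq J$ put $V_e:=\prod_{j\in e}V_j$. For a $\sigma$-algebra $\mathcal{B}$ on the finite set $V_e$ and $f:V_e\to\mathbb{R}$, $\mathbb{E}(f\mid\mathcal{B})(x)$ is the uniform average of $f$ over the atom of $\mathcal{B}$ containing $x$; $\mathcal{B}\vee\mathcal{B}'$ is the smallest $\sigma$-algebra containing both. For a finite nonempty set $Z$ and $f:Z\to\mathbb{R}$, $\mathbb{E}(f(x)\mid x\in Z):=|Z|^{-1}\sum_{x\in Z}f(x)$; constraints written after the bar mean uniform averaging over all tuples satisfying them. All objects depend on a parameter $N$ ranging over a sequence tending to infinity while $J,d,H$ are fixed; implicit constants may depend on $J$ (the constants in $O(\cdot)$ are absolute apart from this, and $O_y$ constants depend only on $y$ and $J$, not on $G$ or $N$). $o_{x\to0;y}(X)$ denotes a quantity bounded in magnitude by $c(x,y)X$ where $c(x,y)\to0$ as $x\to0$ for each fixed $y$; $O_y(X)$ a quantity bounded by $C(y)X$. Cube notation: for a finite set $e$, $\{0,1\}^e$ is the set of tuples $\omega=(\omega_j)_{j\in e}$ with $\omega_j\in\{0,1\}$, and $0^e$ is the all-zero tuple; for $x^{(0)}_J,x^{(1)}_J\in V_J$, $e\subseteq J$ and $\omega\in\{0,1\}^e$, set $x^{(\omega)}_e:=(x^{(\omega_j)}_j)_{j\in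 e}\in V_e$ and $x^{(a)}_e:=(x^{(a)}_j)_{j\in e}$ for $a\in\{0,1\}$. A system of measures is a family of functions $\nu_e:V_e\to[0,\infty)$, $e\in H$, with $\mathbb{E}(\nu_e(x_e)\mid x_e\in V_e)=1+o_{N\to\infty}(1)$. For $e\in H$ and $f:V_e\to\mathbb{R}$, $\mathcal{D}_ef(x^{(0)}_e):=\mathbb{E}\big(\prod_{\omega\in\{0,1\}^e,\ \omega\neq 0^e}f(x^{(\omega)}_e)\mid x^{(1)}_e\in V_e\big)$. The system is pseudorandom if: (i) $\mathcal{D}_e(\nu_e+1)(x_e)=O(1)$ for all $e\in H$, $x_e\in V_e$; (ii) for every choice of exponents $n_{e,\omega}\in\{0,1\}$, $\mathbb{E}\big(\prod_{e\in H}\prod_{\omega\in\{0,1\}^e}\nu_e(x^{(\omega)}_e)^{n_{e,\omega}}\mid x^{(0)}_J,x^{(1)}_J\in V_J\big)=1+o_{N\to\infty}(1)$; (iii) for every $e\in H$, $j\in e$, every choice of $n_{e,\omega}\in\{0,1\}$ and every integer $K\ge0$, $\mathbb{E}\Big(\mathbb{E}\big(\prod_{\omega\in\{0,1\}^e}\nu_e(x^{(\omega)}_e)^{n_{e,\omega}}\mid x^{(0)}_j,x^{(1)}_j\in V_j\big)^K\ \Big|\ x^{(0)}_{e\setminus\{j\}},x^{(1)}_{e\setminus\{j\}}\in V_{e\setminus\{j\}}\Big)=O_K(1)$. *)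

theory Defs
  imports "HOL-Analysis.Analysis" "HOL-Computational_Algebra.Polynomial"
begin

definition VV :: "('j \<Rightarrow> 'v set) \<Rightarrow> 'j set \<Rightarrow> ('j \<Rightarrow> 'v) set" where
  "VV Vj e = PiE e Vj"

definition avg :: "'a set \<Rightarrow> ('a \<Rightarrow> real) \<Rightarrow> real" where
  "avg Z f = (\<Sum>x\<in>Z. f x) / real (card Z)"

text \<open>Cube point x^(omega)_e; omega in {0,1}^e is encoded by the set S = {j in e. omega_j = 1}.\<close>
definition cube_pt :: "'j set \<Rightarrow> 'j set \<Rightarrow> ('j \<Rightarrow> 'v) \<Rightarrow> ('j \<Rightarrow> 'v) \<Rightarrow> ('j \<Rightarrow> 'v)" where
  "cube_pt e S x0 x1 = restrict (\<lambda>j. if j \<in> S then x1 j else x0 j) e"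

definition cube_D :: "('j \<Rightarrow> 'v set) \<Rightarrow> 'j set \<Rightarrow> (('j \<Rightarrow> 'v) \<Rightarrow> real) \<Rightarrow> ('j \<Rightarrow> 'v) \<Rightarrow> real" where
  "cube_D Vj e f x0 = avg (VV Vj e) (\<lambda>x1. \<Prod>S\<in>Pow e - {{}}. f (cube_pt e S x0 x1))"

definition hypergraph_system :: "'j set \<Rightarrow> ('j \<Rightarrow> 'v set) \<Rightarrow> nat \<Rightarrow> 'j set set \<Rightarrow> bool" where
  "hypergraph_system J Vj d H \<longleftrightarrow>
     finite J \<and> (\<forall>j\<in>J. finite (Vj j) \<and> Vj j \<noteq> {}) \<and> d \<ge> 1 \<and>
     H \<subseteq> {e. e \<subseteq> J \<and> card e = d}"

text \<open>A sequence (indexed by N, N \<rightarrow> \<infinity>) of hypergraph systems with fixed J, d, H, together with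
  a pseudorandom system of measures nu N e : V_e \<rightarrow> [0,\<infinity>).\<close>
definition pseudorandom_system ::
  "'j set \<Rightarrow> (nat \<Rightarrow> 'j \<Rightarrow> 'v set) \<Rightarrow> nat \<Rightarrow> 'j set set \<Rightarrow> (nat \<Rightarrow> 'j set \<Rightarrow> ('j \<Rightarrow> 'v) \<Rightarrow> real) \<Rightarrow> bool" where
  "pseudorandom_system J V d H \<nu> \<longleftrightarrow>
     (\<forall>N. hypergraph_system J (V N) d H) \<and>
     (\<forall>N. \<forall>e\<in>H. \<forall>x\<in>VV (V N) e. \<nu> N e x \<ge> 0) \<and>
     (\<forall>e\<in>H. (\<lambda>N. avg (VV (V N) e) (\<nu> N e)) \<longlonglongrightarrow> 1) \<and>
     (\<exists>C. \<forall>N. \<forall>e\<in>H. \<forall>x\<in>VV (V N) e. \<bar>cube_D (V N) e (\<lambda>y. \<nu> N e y + 1) x\<bar> \<le> C) \<and>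
     (\<forall>T \<subseteq> Sigma H Pow.
        (\<lambda>N. avg (VV (V N) J \<times> VV (V N) J)
           (\<lambda>(x0, x1). \<Prod>p\<in>T. \<nu> N (fst p) (cube_pt (fst p) (snd p) x0 x1))) \<longlonglongrightarrow> 1) \<and>
     (\<forall>e\<in>H. \<forall>j\<in>e. \<forall>T \<subseteq> Pow e. \<forall>K::nat. \<exists>C. \<forall>N.
        avg (VV (V N) (e - {j}) \<times> VV (V N) (e - {j}))
          (\<lambda>(y0, y1). (avg (V N j \<times> V N j)
             (\<lambda>(a, b). \<Prod>S\<in>T. \<nu> N e (cube_pt e S (y0(j := a)) (y1(j := b))))) ^ K) \<le> C)"

definition atom :: "'a set set \<Rightarrow> 'a \<Rightarrow> 'a set" where
  "atom M x = \<Inter>{A\<in>M. x \<in> A}"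

definition atoms :: "'a set \<Rightarrow> 'a set set \<Rightarrow> 'a set set" where
  "atoms \<Omega> M = atom M ` \<Omega>"

definition cond_exp :: "'a set set \<Rightarrow> ('a \<Rightarrow> real) \<Rightarrow> 'a \<Rightarrow> real" where
  "cond_exp M f x = avg (atom M x) f"

definition join_sa :: "'a set \<Rightarrow> 'a set set \<Rightarrow> 'a set set \<Rightarrow> 'a set set" where
  "join_sa \<Omega> M M' = sigma_sets \<Omega> (M \<union> M')"

end

theory Submission
  imports Defs
begin


lemma rpf_poly:
  fixes g :: "real \<Rightarrow> real"
  assumes "real_polynomial_function g"
  shows "\<exists>P. \<forall>x. g x = poly P x"
  using assms
proof induction
  case (linear f)
  then interpret bounded_linear f .
  have h1: "f x = x * f 1" for x using scaleR[of x 1] by (simp only: real_scaleR_def mult_1_right)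
  show ?case
  proof (rule exI[of _ "[:0, f 1:]"], rule allI)
    fix x show "f x = poly [:0, f 1:] x" using h1[of x] by simp
  qed
next
  case (const c)
  show ?case by (rule exI[of _ "[:c:]"]) simp
next
  case (add f g)
  then obtain P Q where PQ: "\<forall>x. f x = poly P x" "\<forall>x. g x = poly Q x" by blast
  show ?case using PQ by (intro exI[of _ "P + Q"]) simp
next
  case (mult f g)
  then obtain P Q where PQ: "\<forall>x. f x = poly P x" "\<forall>x. g x = poly Q x" by blast
  show ?case using PQ by (intro exI[of _ "P * Q"]) simp
qed

definition hat :: "real \<Rightarrow> real \<Rightarrow> real \<Rightarrow> real \<Rightarrow> real" where
  "hat s t w y = max 0 (min 1 (min (2*(y-s)/w+1) (2*(t-y)/w+1)))"

lemma hat_approx: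
  fixes a b s t w \<sigma> :: real
  assumes "0 < \<sigma>" "w \<noteq> 0"
  shows "\<exists>P :: real poly. \<forall>y\<in>{a..b}. \<bar>hat s t w y - poly P y\<bar> < \<sigma>"
proof -
  have "continuous_on {a..b} (hat s t w)"
    unfolding hat_def using assms(2) by (intro continuous_intros) auto
  then obtain g where g: "real_polynomial_function g" "\<And>x. x \<in> {a..b} \<Longrightarrow> \<bar>hat s t w x - g x\<bar> < \<sigma>"
    using Stone_Weierstrass_real_polynomial_function[of "{a..b}" "hat s t w" \<sigma>] assms by auto
  obtain P where "\<forall>x. g x = poly P x" using rpf_poly[OF g(1)] by blast
  then have "\<forall>y\<in>{a..b}. \<bar>hat s t w y - poly P y\<bar> < \<sigma>" using g(2) by auto
  then show ?thesis by blast
qed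

lemma hat_bounds: "0 \<le> hat s t w y" "hat s t w y \<le> 1"
  unfolding hat_def by auto

lemma hat_ind:
  fixes a w y :: real and m K :: int
  assumes w: "w > 0" and K: "K \<ge> 1"
    and i1: "\<lfloor>(y-a)/w + 1/2\<rfloor> \<noteq> m" and i2: "\<lfloor>(y-a)/w + 1/2\<rfloor> \<noteq> m + K"
  shows "hat (a + w*m) (a + w*(m+K)) w y = (if a + w*m \<le> y \<and> y < a + w*(m+K) then 1 else 0)"
proof -
  define z where "z = (y-a)/w"
  have y: "y = a + w*z" using w unfolding z_def by simp
  have e1: "2*(y-(a + w*m))/w+1 = 2*(z-m)+1" using w unfolding y by (simp add: field_simps)
  have e2: "2*((a + w*(m+K))-y)/w+1 = 2*(m+K-z)+1" using w unfolding y by (simp add: field_simps)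
  have c1: "z < m - 1/2 \<or> z \<ge> m + 1/2"
    using i1 unfolding z_def[symmetric] floor_eq_iff by linarith
  have c2: "z < m + K - 1/2 \<or> z \<ge> m + K + 1/2"
    using i2 unfolding z_def[symmetric] floor_eq_iff by linarith
  have iff1: "(a + w*m \<le> y) = (m \<le> z)" unfolding y using w by simp
  have iff2: "(y < a + w*(m+K)) = (z < m+K)" unfolding y using w by simp
  have A: "p < 0 \<Longrightarrow> max 0 (min 1 (min p q)) = (0::real)" for p q :: real by (simp add: max_def min_def)
  have B: "1 \<le> p \<Longrightarrow> 1 \<le> q \<Longrightarrow> max 0 (min 1 (min p q)) = (1::real)" for p q :: real by (simp add: max_def min_def)
  have C: "q \<le> 0 \<Longrightarrow> max 0 (min 1 (min p q)) = (0::real)" for p q :: real by (simp add: max_def min_def)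
  have Kr: "(1::real) \<le> of_int K" using K by simp
  have "max 0 (min 1 (min (2*(z-m)+1) (2*(m+K-z)+1))) = (if m \<le> z \<and> z < m+K then 1 else (0::real))"
  proof -
    consider "z < m - 1/2" | "m + 1/2 \<le> z" "z < m + K - 1/2" | "z \<ge> m + K + 1/2"
      using c1 c2 Kr by linarith
    then show ?thesis
    proof cases
      case 1
      then have "2*(z-m)+1 < 0" "\<not> (m \<le> z \<and> z < m+K)" by auto
      then show ?thesis using A by simp
    next
      case 2
      then have "1 \<le> 2*(z-m)+1" "1 \<le> 2*(m+K-z)+1" "m \<le> z \<and> z < m+K" by auto
      then show ?thesis using B by simp
    next
      case 3
      then have "2*(m+K-z)+1 \<le> 0" "\<not> (m \<le> z \<and> z < m+K)" using Kr by auto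
      then show ?thesis using C by simp
    qed
  qed
  then show ?thesis unfolding hat_def e1 e2 iff1 iff2 by simp
qed

lemma avg_close:
  fixes g :: "'a \<Rightarrow> real"
  assumes "finite Z" "Z \<noteq> {}" "\<And>y. y \<in> Z \<Longrightarrow> \<bar>g y - c\<bar> \<le> e"
  shows "\<bar>c - avg Z g\<bar> \<le> e"
proof -
  have cp: "real (card Z) > 0" using assms by auto
  have "avg Z g - c = (\<Sum>y\<in>Z. g y - c) / real (card Z)"
    using cp by (simp add: avg_def sum_subtractf field_simps)
  also have "\<bar>\<dots>\<bar> \<le> (\<Sum>y\<in>Z. \<bar>g y - c\<bar>) / real (card Z)"
    using cp by (simp add: divide_right_mono sum_abs)
  also have "\<dots> \<le> (\<Sum>y\<in>Z. e) / real (card Z)"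
    using cp assms(3) by (intro divide_right_mono sum_mono) auto
  also have "\<dots> = e" using cp by simp
  finally show ?thesis by linarith
qed

lemma floor_eq_close: "\<lfloor>u::real\<rfloor> = \<lfloor>v\<rfloor> \<Longrightarrow> \<bar>u - v\<bar> < 1"
proof -
  assume "\<lfloor>u\<rfloor> = \<lfloor>v\<rfloor>"
  moreover have "of_int \<lfloor>u\<rfloor> \<le> u" "u < of_int \<lfloor>u\<rfloor> + 1" "of_int \<lfloor>v\<rfloor> \<le> v" "v < of_int \<lfloor>v\<rfloor> + 1"
    by linarith+
  ultimately show ?thesis by (simp add: abs_less_iff) linarith
qed

definition Kof :: "real \<Rightarrow> nat" where "Kof \<sigma> = nat \<lceil>1/\<sigma>\<rceil>"
definition wof :: "real \<Rightarrow> real \<Rightarrow> real" where "wof \<epsilon> \<sigma> = \<epsilon> / (2 * real (Kof \<sigma>))"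
definition Nmx :: "real \<Rightarrow> real set \<Rightarrow> int" where "Nmx \<epsilon> I = \<lceil>2*(Sup I - Inf I)/\<epsilon>\<rceil>"
definition Pf :: "real \<Rightarrow> real \<Rightarrow> real set \<Rightarrow> nat \<Rightarrow> int \<Rightarrow> real poly" where
  "Pf \<epsilon> \<sigma> I r n = (SOME P. \<forall>y\<in>{Inf I..Sup I}.
     \<bar>hat (Inf I + wof \<epsilon> \<sigma> * of_int (int r + n * int (Kof \<sigma>)))
          (Inf I + wof \<epsilon> \<sigma> * of_int (int r + n * int (Kof \<sigma>) + int (Kof \<sigma>))) (wof \<epsilon> \<sigma>) y - poly P y\<bar> < \<sigma>)"
definition Sidx :: "real \<Rightarrow> real \<Rightarrow> real set \<Rightarrow> (nat \<times> int) set" where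
  "Sidx \<epsilon> \<sigma> I = {..<Kof \<sigma>} \<times> {-1..Nmx \<epsilon> I}"
definition Cdeg :: "real \<Rightarrow> real \<Rightarrow> real set \<Rightarrow> nat" where
  "Cdeg \<epsilon> \<sigma> I = (\<Sum>p\<in>Sidx \<epsilon> \<sigma> I. degree (Pf \<epsilon> \<sigma> I (fst p) (snd p)))"
definition Ccoef :: "real \<Rightarrow> real \<Rightarrow> real set \<Rightarrow> real" where
  "Ccoef \<epsilon> \<sigma> I = (\<Sum>p\<in>Sidx \<epsilon> \<sigma> I. \<Sum>i\<le>degree (Pf \<epsilon> \<sigma> I (fst p) (snd p)). \<bar>coeff (Pf \<epsilon> \<sigma> I (fst p) (snd p)) i\<bar>)"
definition Catoms :: "real \<Rightarrow> real set \<Rightarrow> nat" where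
  "Catoms \<epsilon> I = nat (Nmx \<epsilon> I) + 2"

lemma key:
  fixes \<Omega> :: "'a set" and \<nu> :: "'a \<Rightarrow> real" and G :: "'a \<Rightarrow> real" and I :: "real set"
  assumes fin: "finite \<Omega>" and ne: "\<Omega> \<noteq> {}" and nn: "\<forall>x\<in>\<Omega>. \<nu> x \<ge> 0" and av: "avg \<Omega> \<nu> < 2"
    and \<epsilon>: "0 < \<epsilon>" "\<epsilon> < 1" and \<sigma>: "0 < \<sigma>" "\<sigma> < 1/2"
    and I: "is_interval I" "bounded I" "I \<noteq> {}" and GI: "\<forall>x\<in>\<Omega>. G x \<in> I"
  shows "\<exists>B. sigma_algebra \<Omega> B \<and>
          (\<forall>B'. sigma_algebra \<Omega> B' \<longrightarrow>
             (\<forall>x\<in>\<Omega>. \<bar>G x - cond_exp (join_sa \<Omega> B B') G x\<bar> \<le> \<epsilon>)) \<and>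
          card (atoms \<Omega> B) \<le> Catoms \<epsilon> I \<and>
          (\<forall>A\<in>atoms \<Omega> B. \<exists>P :: real poly.
             degree P \<le> Cdeg \<epsilon> \<sigma> I \<and>
             (\<forall>i. \<bar>coeff P i\<bar> \<le> Ccoef \<epsilon> \<sigma> I) \<and>
             (\<forall>y\<in>I. \<bar>poly P y\<bar> \<le> 2) \<and>
             avg \<Omega> (\<lambda>x. \<bar>indicator A x - poly P (G x)\<bar> * (\<nu> x + 1)) \<le> 12 * \<sigma>)"
proof -
  define a where "a = Inf I"
  define b where "b = Sup I"
  have Iab: "I \<subseteq> {a..b}"
    using cInf_lower[OF _ bounded_imp_bdd_below[OF I(2)]] cSup_upper[OF _ bounded_imp_bdd_above[OF I(2)]]
    unfolding a_def b_def by auto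
  have ab: "a \<le> b" using Iab I(3) by auto
  define K where "K = Kof \<sigma>"
  have K1: "real K \<ge> 1/\<sigma>" unfolding K_def Kof_def by linarith
  have Kpos: "K \<ge> 1"
  proof -
    have "1/\<sigma> > 0" using \<sigma> by simp
    then show ?thesis using K1 by linarith
  qed
  have invK: "1 / real K \<le> \<sigma>"
    using K1 \<sigma> Kpos by (simp add: divide_le_eq field_simps)
  define w where "w = wof \<epsilon> \<sigma>"
  have wpos: "w > 0" unfolding w_def wof_def K_def[symmetric] using \<epsilon> Kpos by simp
  have wK: "w * real K = \<epsilon>/2" unfolding w_def wof_def K_def[symmetric] using Kpos by simp
  have wKpos: "w * real K > 0" using wK \<epsilon> by simp
  define wt where "wt x = \<nu> x + 1" for x
  have wt1: "\<forall>x\<in>\<Omega>. wt x \<ge> 1" using nn unfolding wt_def by auto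
  define idx where "idx y = \<lfloor>(y-a)/w + 1/2\<rfloor>" for y
  define bm where "bm r = (\<Sum>x\<in>\<Omega>. if idx (G x) mod int K = int r then wt x else 0)" for r
  define S where "S = (\<Sum>x\<in>\<Omega>. wt x)"
  have sumbm: "(\<Sum>r<K. bm r) = S"
  proof -
    have "(\<Sum>r<K. bm r) = (\<Sum>x\<in>\<Omega>. \<Sum>r<K. if idx (G x) mod int K = int r then wt x else 0)"
      unfolding bm_def by (rule sum.swap)
    also have "\<dots> = S" unfolding S_def
    proof (rule sum.cong[OF refl])
      fix x
      have c: "(idx (G x) mod int K = int r) = (nat (idx (G x) mod int K) = r)" for r
        using Kpos by auto
      have lt: "nat (idx (G x) mod int K) < K" using Kpos by (simp add: nat_less_iff)
      show "(\<Sum>r<K. if idx (G x) mod int K = int r then wt x else 0) = wt x"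
        unfolding c using lt by simp
    qed
    finally show ?thesis .
  qed
  obtain r where r: "r < K" "bm r \<le> S / real K"
  proof (rule ccontr)
    assume "\<not> thesis"
    then have "\<forall>r<K. bm r > S / real K" using that by force
    then have "(\<Sum>r<K. S / real K) < (\<Sum>r<K. bm r)"
      using Kpos by (intro sum_strict_mono) (auto simp: lessThan_empty_iff)
    then show False using sumbm Kpos by simp
  qed
  define f where "f x = \<lfloor>(G x - a - w * real r) / (w * real K)\<rfloor>" for x
  define B where "B = sets (vimage_algebra \<Omega> f (count_space UNIV))"
  have Beq: "B = {f -` T \<inter> \<Omega> | T. T \<in> UNIV}"
    unfolding B_def by (subst sets_vimage_algebra2) auto
  have saB: "sigma_algebra \<Omega> B"
    unfolding B_def using sets.sigma_algebra_axioms[of "vimage_algebra \<Omega> f (count_space UNIV)"] by simp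
  have FB: "f -` {f x} \<inter> \<Omega> \<in> B" for x unfolding Beq by blast
  have atomB: "atom B x = f -` {f x} \<inter> \<Omega>" if "x \<in> \<Omega>" for x
  proof
    show "atom B x \<subseteq> f -` {f x} \<inter> \<Omega>" unfolding atom_def using FB[of x] that by blast
    show "f -` {f x} \<inter> \<Omega> \<subseteq> atom B x" unfolding atom_def Beq by blast
  qed
  have frange: "f x \<in> {-1..Nmx \<epsilon> I}" if "x \<in> \<Omega>" for x
  proof -
    define u where "u = (G x - a - w * real r) / (w * real K)"
    have y: "a \<le> G x" "G x \<le> b" using GI that Iab by auto
    have "w * real r \<le> w * real K" using r(1) wpos by simp
    then have "-1 \<le> u" unfolding u_def using wKpos y by (simp add: le_divide_eq)
    moreover have "u \<le> 2*(b - a)/\<epsilon>"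
    proof -
      have "u \<le> (b - a) / (w * real K)" proof -
        have "0 \<le> w * real r" using wpos by simp
        then show ?thesis unfolding u_def using wKpos y by (intro divide_right_mono) auto
      qed
      also have "\<dots> = 2*(b-a)/\<epsilon>" unfolding wK by simp
      finally show ?thesis .
    qed
    ultimately show ?thesis unfolding f_def u_def[symmetric] Nmx_def a_def[symmetric] b_def[symmetric]
      by (auto simp: le_floor_iff floor_le_iff) linarith
  qed
  have Nmx0: "Nmx \<epsilon> I \<ge> 0" proof -
    have "0 \<le> (2*b - 2*a)/\<epsilon>" using ab \<epsilon> by (intro divide_nonneg_pos) auto
    then show ?thesis unfolding Nmx_def a_def[symmetric] b_def[symmetric] by (simp add: algebra_simps)
  qed
  have partA: "\<forall>B'. sigma_algebra \<Omega> B' \<longrightarrow>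
             (\<forall>x\<in>\<Omega>. \<bar>G x - cond_exp (join_sa \<Omega> B B') G x\<bar> \<le> \<epsilon>)"
  proof (intro allI impI ballI)
    fix B' x assume x: "x \<in> \<Omega>"
    define M where "M = join_sa \<Omega> B B'"
    have FM: "f -` {f x} \<inter> \<Omega> \<in> M" unfolding M_def join_sa_def using FB[of x]
      by (auto intro: sigma_sets.Basic)
    have OM: "\<Omega> \<in> M" unfolding M_def join_sa_def by (rule sigma_sets_top)
    define Z where "Z = atom M x"
    have ZF: "Z \<subseteq> f -` {f x} \<inter> \<Omega>" unfolding Z_def atom_def using FM x by blast
    have xZ: "x \<in> Z" unfolding Z_def atom_def by blast
    have finZ: "finite Z" using ZF fin by (meson finite_subset inf_le2 subset_trans)
    have close: "\<bar>G y - G x\<bar> \<le> \<epsilon>" if "y \<in> Z" for y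
    proof -
      have "f y = f x" using ZF that by auto
      then have "\<bar>(G y - a - w * real r) / (w * real K) - (G x - a - w * real r) / (w * real K)\<bar> < 1"
        unfolding f_def by (rule floor_eq_close)
      then have "\<bar>(G y - G x) / (w * real K)\<bar> < 1" by (simp add: diff_divide_distrib[symmetric])
      then have "\<bar>G y - G x\<bar> < w * real K" using wKpos by (simp add: abs_divide divide_less_eq)
      then show ?thesis using wK \<epsilon> by simp
    qed
    show "\<bar>G x - cond_exp M G x\<bar> \<le> \<epsilon>"
      unfolding cond_exp_def Z_def[symmetric] by (rule avg_close[OF finZ]) (use xZ close in auto)
  qed
  have partB: "card (atoms \<Omega> B) \<le> Catoms \<epsilon> I"
  proof -
    have "atoms \<Omega> B = (\<lambda>v. f -` {v} \<inter> \<Omega>) ` (f ` \<Omega>)"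
      unfolding atoms_def image_image using atomB by (intro image_cong) auto
    then have "card (atoms \<Omega> B) \<le> card (f ` \<Omega>)" by (simp add: card_image_le fin)
    also have "\<dots> \<le> card {-1..Nmx \<epsilon> I}" using frange by (intro card_mono) auto
    also have "\<dots> = Catoms \<epsilon> I" unfolding Catoms_def using Nmx0 by simp
    finally show ?thesis .
  qed
  have partC: "\<forall>A\<in>atoms \<Omega> B. \<exists>P :: real poly.
             degree P \<le> Cdeg \<epsilon> \<sigma> I \<and>
             (\<forall>i. \<bar>coeff P i\<bar> \<le> Ccoef \<epsilon> \<sigma> I) \<and>
             (\<forall>y\<in>I. \<bar>poly P y\<bar> \<le> 2) \<and>
             avg \<Omega> (\<lambda>x. \<bar>indicator A x - poly P (G x)\<bar> * (\<nu> x + 1)) \<le> 12 * \<sigma>"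
  proof
    fix A assume "A \<in> atoms \<Omega> B"
    then obtain x0 where x0: "x0 \<in> \<Omega>" "A = f -` {f x0} \<inter> \<Omega>" unfolding atoms_def using atomB by auto
    define n where "n = f x0"
    have nr: "n \<in> {-1..Nmx \<epsilon> I}" unfolding n_def using frange x0 by blast
    have rn: "(r, n) \<in> Sidx \<epsilon> \<sigma> I" unfolding Sidx_def K_def[symmetric] using r nr by simp
    define P where "P = Pf \<epsilon> \<sigma> I r n"
    define m where "m = int r + n * int K"
    have Pspec: "\<forall>y\<in>{a..b}. \<bar>hat (a + w * of_int m) (a + w * of_int (m + int K)) w y - poly P y\<bar> < \<sigma>"
    proof -
      have ex: "\<exists>P. \<forall>y\<in>{a..b}. \<bar>hat (a + w * of_int m) (a + w * of_int (m + int K)) w y - poly P y\<bar> < \<sigma>"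
        using hat_approx \<sigma> wpos by simp
      show ?thesis unfolding P_def Pf_def a_def[symmetric] b_def[symmetric] w_def[symmetric] K_def[symmetric]
        m_def[symmetric] by (rule someI_ex[OF ex])
    qed
    have degP: "degree P \<le> Cdeg \<epsilon> \<sigma> I"
      unfolding Cdeg_def P_def
      using member_le_sum[OF rn, of "\<lambda>p. degree (Pf \<epsilon> \<sigma> I (fst p) (snd p))"]
      by (simp add: Sidx_def)
    have coefP: "\<bar>coeff P i\<bar> \<le> Ccoef \<epsilon> \<sigma> I" for i
    proof -
      have fS: "finite (Sidx \<epsilon> \<sigma> I)" unfolding Sidx_def by simp
      have "(\<Sum>i\<le>degree P. \<bar>coeff P i\<bar>) \<le> Ccoef \<epsilon> \<sigma> I"
        unfolding Ccoef_def P_def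
        by (rule member_le_sum[OF rn, of "\<lambda>p. \<Sum>i\<le>degree (Pf \<epsilon> \<sigma> I (fst p) (snd p)). \<bar>coeff (Pf \<epsilon> \<sigma> I (fst p) (snd p)) i\<bar>", simplified])
           (auto intro: sum_nonneg fS)
      moreover have "0 \<le> (\<Sum>i\<le>degree P. \<bar>coeff P i\<bar>)" by (simp add: sum_nonneg)
      ultimately have C0: "0 \<le> Ccoef \<epsilon> \<sigma> I" "(\<Sum>i\<le>degree P. \<bar>coeff P i\<bar>) \<le> Ccoef \<epsilon> \<sigma> I" by linarith+
      moreover have "i \<le> degree P \<Longrightarrow> \<bar>coeff P i\<bar> \<le> (\<Sum>i\<le>degree P. \<bar>coeff P i\<bar>)"
        by (rule member_le_sum) auto
      ultimately show ?thesis by (cases "i \<le> degree P") (auto simp: coeff_eq_0 simp del: sum_abs_ge_zero)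
    qed
    have polyb: "\<bar>poly P y\<bar> \<le> 2" if "y \<in> I" for y
    proof -
      have "\<bar>hat (a + w * of_int m) (a + w * of_int (m + int K)) w y - poly P y\<bar> < \<sigma>"
        using Pspec that Iab by blast
      moreover note hat_bounds[of "a + w * of_int m" "a + w * of_int (m + int K)" w y]
      ultimately show ?thesis using \<sigma> by linarith
    qed
    have ptw: "\<bar>indicator A x - poly P (G x)\<bar> * (\<nu> x + 1) \<le>
       \<sigma> * wt x + (if idx (G x) mod int K = int r then 3 * wt x else 0)" if x: "x \<in> \<Omega>" for x
    proof (cases "idx (G x) mod int K = int r")
      case True
      have "\<bar>indicator A x - poly P (G x)\<bar> \<le> 3"
        using polyb[of "G x"] GI x by (auto simp: indicator_def)
      then have "\<bar>indicator A x - poly P (G x)\<bar> * wt x \<le> 3 * wt x"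
        using wt1 x by (intro mult_right_mono) auto
      moreover have "0 \<le> \<sigma> * wt x"
      proof -
        have "1 \<le> wt x" using wt1 x by blast
        then show ?thesis using \<sigma> by simp
      qed
      ultimately show ?thesis using True unfolding wt_def by simp
    next
      case False
      have modm: "m mod int K = int r" "(m + int K) mod int K = int r"
        unfolding m_def using r(1) by auto
      have i1: "\<lfloor>(G x - a)/w + 1/2\<rfloor> \<noteq> m" using False modm unfolding idx_def by auto
      have i2: "\<lfloor>(G x - a)/w + 1/2\<rfloor> \<noteq> m + int K" using False modm unfolding idx_def by auto
      have h: "hat (a + w*m) (a + w*(m + int K)) w (G x) =
          (if a + w*m \<le> G x \<and> G x < a + w*(m + int K) then 1 else 0)"
        by (rule hat_ind[OF wpos _ i1 i2]) (use Kpos in simp)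
      have fx: "(f x = n) = (a + w*m \<le> G x \<and> G x < a + w*(m + int K))"
      proof -
        have "(f x = n) = (of_int n \<le> (G x - a - w * real r) / (w * real K) \<and>
                 (G x - a - w * real r) / (w * real K) < of_int n + 1)"
          unfolding f_def by (rule floor_eq_iff)
        also have "\<dots> = (of_int n * (w * real K) \<le> G x - a - w * real r \<and>
                 G x - a - w * real r < (of_int n + 1) * (w * real K))"
          using wKpos by (simp add: le_divide_eq divide_less_eq)
        also have "\<dots> = (a + w*m \<le> G x \<and> G x < a + w*(m + int K))"
          unfolding m_def by (simp add: algebra_simps)
        finally show ?thesis .
      qed
      have ind: "indicator A x = hat (a + w*m) (a + w*(m + int K)) w (G x)"
        unfolding h x0(2) n_def[symmetric] using fx x by (simp add: indicator_def)
      have "\<bar>indicator A x - poly P (G x)\<bar> < \<sigma>"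
        unfolding ind using Pspec GI x Iab by blast
      then have "\<bar>indicator A x - poly P (G x)\<bar> * wt x \<le> \<sigma> * wt x"
        using wt1 x by (intro mult_right_mono) auto
      then show ?thesis using False unfolding wt_def by simp
    qed
    have cardpos: "real (card \<Omega>) > 0" using fin ne by (simp add: card_gt_0_iff)
    have S3: "S < 3 * real (card \<Omega>)"
    proof -
      have "S = sum \<nu> \<Omega> + real (card \<Omega>)" unfolding S_def wt_def by (simp add: sum.distrib)
      moreover have "sum \<nu> \<Omega> < 2 * real (card \<Omega>)" using av cardpos by (simp add: avg_def divide_less_eq)
      ultimately show ?thesis by simp
    qed
    have S0: "S \<ge> 0" unfolding S_def using wt1 by (intro sum_nonneg) auto
    have "(\<Sum>x\<in>\<Omega>. \<bar>indicator A x - poly P (G x)\<bar> * (\<nu> x + 1)) \<le>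
          (\<Sum>x\<in>\<Omega>. \<sigma> * wt x + (if idx (G x) mod int K = int r then 3 * wt x else 0))"
      using ptw by (rule sum_mono)
    also have "\<dots> = (\<Sum>x\<in>\<Omega>. \<sigma> * wt x) + (\<Sum>x\<in>\<Omega>. if idx (G x) mod int K = int r then 3 * wt x else 0)"
      by (rule sum.distrib)
    also have "\<dots> = \<sigma> * S + 3 * bm r"
      unfolding S_def bm_def sum_distrib_left by (intro arg_cong2[where f="(+)"] refl sum.cong) auto
    also have "\<dots> \<le> \<sigma> * S + 3 * (S / real K)" using r(2) by simp
    also have "\<dots> \<le> \<sigma> * S + 3 * (S * \<sigma>)"
    proof -
      have "S / real K = S * (1 / real K)" by simp
      also have "\<dots> \<le> S * \<sigma>" using invK S0 by (intro mult_left_mono) auto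
      finally show ?thesis by simp
    qed
    also have "\<dots> = 4 * \<sigma> * S" by simp
    also have "\<dots> \<le> 4 * \<sigma> * (3 * real (card \<Omega>))" using S3 \<sigma> by (intro mult_left_mono) auto
    finally have "(\<Sum>x\<in>\<Omega>. \<bar>indicator A x - poly P (G x)\<bar> * (\<nu> x + 1)) \<le> 12 * \<sigma> * real (card \<Omega>)"
      by simp
    then have "avg \<Omega> (\<lambda>x. \<bar>indicator A x - poly P (G x)\<bar> * (\<nu> x + 1)) \<le> 12 * \<sigma>"
      unfolding avg_def using cardpos by (simp add: divide_le_eq)
    then show "\<exists>P :: real poly.
             degree P \<le> Cdeg \<epsilon> \<sigma> I \<and>
             (\<forall>i. \<bar>coeff P i\<bar> \<le> Ccoef \<epsilon> \<sigma> I) \<and>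
             (\<forall>y\<in>I. \<bar>poly P y\<bar> \<le> 2) \<and>
             avg \<Omega> (\<lambda>x. \<bar>indicator A x - poly P (G x)\<bar> * (\<nu> x + 1)) \<le> 12 * \<sigma>"
      using degP coefP polyb by (intro exI[of _ P] conjI allI ballI) auto
  qed
  show ?thesis by (rule exI[of _ B], intro conjI saB partA partB partC)
qed


theorem mainTheorem14:
  fixes J :: "'j set" and V :: "nat \<Rightarrow> 'j \<Rightarrow> 'v set" and d :: nat and H :: "'j set set"
    and \<nu> :: "nat \<Rightarrow> 'j set \<Rightarrow> ('j \<Rightarrow> 'v) \<Rightarrow> real"
  assumes "pseudorandom_system J V d H \<nu>"
  shows "\<exists>(Catoms :: real \<Rightarrow> real set \<Rightarrow> nat) (Cdeg :: real \<Rightarrow> real \<Rightarrow> real set \<Rightarrow> nat)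
            (Ccoef :: real \<Rightarrow> real \<Rightarrow> real set \<Rightarrow> real) (CP :: real) (Cerr :: real)
            (N0 :: real \<Rightarrow> real \<Rightarrow> nat).
    \<forall>\<epsilon> \<sigma> :: real. 0 < \<epsilon> \<longrightarrow> \<epsilon> < 1 \<longrightarrow> 0 < \<sigma> \<longrightarrow> \<sigma> < 1/2 \<longrightarrow>
    (\<forall>N \<ge> N0 \<epsilon> \<sigma>. \<forall>e\<in>H. \<forall>I :: real set. is_interval I \<longrightarrow> bounded I \<longrightarrow> I \<noteq> {} \<longrightarrow>
      (\<forall>G :: ('j \<Rightarrow> 'v) \<Rightarrow> real. (\<forall>x\<in>VV (V N) e. G x \<in> I) \<longrightarrow>
        (\<exists>B. sigma_algebra (VV (V N) e) B \<and>
          (\<forall>B'. sigma_algebra (VV (V N) e) B' \<longrightarrow>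
             (\<forall>x\<in>VV (V N) e. \<bar>G x - cond_exp (join_sa (VV (V N) e) B B') G x\<bar> \<le> \<epsilon>)) \<and>
          card (atoms (VV (V N) e) B) \<le> Catoms \<epsilon> I \<and>
          (\<forall>A\<in>atoms (VV (V N) e) B. \<exists>P :: real poly.
             degree P \<le> Cdeg \<epsilon> \<sigma> I \<and>
             (\<forall>i. \<bar>coeff P i\<bar> \<le> Ccoef \<epsilon> \<sigma> I) \<and>
             (\<forall>y\<in>I. \<bar>poly P y\<bar> \<le> CP) \<and>
             avg (VV (V N) e) (\<lambda>x. \<bar>indicator A x - poly P (G x)\<bar> * (\<nu> N e x + 1)) \<le> Cerr * \<sigma>))))"
proof -
  note pr = assms[unfolded pseudorandom_system_def]
  note hs = pr[THEN conjunct1]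
  note nn = pr[THEN conjunct2, THEN conjunct1]
  note conv = pr[THEN conjunct2, THEN conjunct2, THEN conjunct1]
  have finJ: "finite J" and HJ: "H \<subseteq> Pow J" using hs unfolding hypergraph_system_def by auto
  have finH: "finite H" using finJ HJ by (meson finite_Pow_iff finite_subset)
  have "\<forall>e\<in>H. eventually (\<lambda>N. avg (VV (V N) e) (\<nu> N e) < 2) sequentially"
  proof
    fix e assume "e \<in> H"
    then have "(\<lambda>N. avg (VV (V N) e) (\<nu> N e)) \<longlonglongrightarrow> 1" using conv by blast
    then show "eventually (\<lambda>N. avg (VV (V N) e) (\<nu> N e) < 2) sequentially"
      by (rule order_tendstoD(2)) simp
  qed
  then have "eventually (\<lambda>N. \<forall>e\<in>H. avg (VV (V N) e) (\<nu> N e) < 2) sequentially"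
    by (rule eventually_ball_finite[OF finH])
  then obtain N0c where N0c: "\<And>N. N \<ge> N0c \<Longrightarrow> \<forall>e\<in>H. avg (VV (V N) e) (\<nu> N e) < 2"
    unfolding eventually_sequentially by blast
  have finO: "finite (VV (V N) e)" "VV (V N) e \<noteq> {}" if "e \<in> H" for N e
  proof -
    have eJ: "e \<subseteq> J" using HJ that by auto
    have hj: "\<forall>j\<in>J. finite (V N j) \<and> V N j \<noteq> {}" using hs unfolding hypergraph_system_def by blast
    show "finite (VV (V N) e)" unfolding VV_def using eJ hj finJ
      by (intro finite_PiE) (auto intro: finite_subset)
    show "VV (V N) e \<noteq> {}" unfolding VV_def using eJ hj by (auto simp: PiE_eq_empty_iff)
  qed
  show ?thesis
    apply (rule exI[of _ Catoms], rule exI[of _ Cdeg], rule exI[of _ Ccoef], rule exI[of _ "2::real"],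
           rule exI[of _ "12::real"], rule exI[of _ "\<lambda>_ _. N0c"])
    apply (intro allI impI ballI)
    apply (rule key)
               apply (simp add: finO)
              apply (simp add: finO)
             apply (use nn in blast)
            apply (use N0c in blast)
           apply assumption+
    done
qed

end
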